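(* For every $n\ge5$, the map $p_n^2:X_n^2\to X_{n-1}^2$, $(x_1,\dots,x_n)\mapsto(x_1,\dots,x_{n-1})$, is not a (locally trivial) fibration.
   Context: $X_n^2$ ($n\ge3$) is the space of ordered $n$-tuples of points of $\mathbb{C}^2$ such that no three of the points lie on a common (affine) line. *)

theory Defs
  imports "HOL-Analysis.Analysis"
begin

type_synonym C2 = "complex \<times> complex"

definition cline :: "C2 \<Rightarrow> C2 \<Rightarrow> C2 set" where
  "cline a v = {(fst a + t * fst v, snd a + t * snd v) | t. True}"

definition on_common_line :: "C2 \<Rightarrow> C2 \<Rightarrow> C2 \<Rightarrow> bool" where
  "on_common_line x y z \<longleftrightarrow>
     (\<exists>a v. v \<noteq> (0,0) \<and> x \<in> cline a v \<and> y \<in> cline a v \<and> z \<in> cline a v)"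

text \<open>X_n^2: ordered n-tuples (indexed by 0..n-1) of points of C^2, no three on a common line.\<close>
definition Xset :: "nat \<Rightarrow> (nat \<Rightarrow> C2) set" where
  "Xset n = {x \<in> PiE {..<n} (\<lambda>_. UNIV).
     \<forall>i<n. \<forall>j<n. \<forall>k<n. i \<noteq> j \<and> i \<noteq> k \<and> j \<noteq> k \<longrightarrow> \<not> on_common_line (x i) (x j) (x k)}"

definition Xtop :: "nat \<Rightarrow> (nat \<Rightarrow> C2) topology" where
  "Xtop n = subtopology (product_topology (\<lambda>_. euclidean) {..<n}) (Xset n)"

definition proj_last :: "nat \<Rightarrow> (nat \<Rightarrow> C2) \<Rightarrow> (nat \<Rightarrow> C2)" where
  "proj_last n x = restrict x {..<n-1}"

definition locally_trivial :: "'a topology \<Rightarrow> 'b topology \<Rightarrow> ('a \<Rightarrow> 'b) \<Rightarrow> 'c topology \<Rightarrow> bool" where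
  "locally_trivial E B p F \<longleftrightarrow>
     continuous_map E B p \<and>
     (\<forall>b \<in> topspace B. \<exists>U \<phi>. openin B U \<and> b \<in> U \<and>
        homeomorphic_map (subtopology E {e \<in> topspace E. p e \<in> U})
                         (prod_topology (subtopology B U) F) \<phi> \<and>
        (\<forall>e \<in> topspace E. p e \<in> U \<longrightarrow> fst (\<phi> e) = p e))"

end

theory Submission
  imports Defs
begin

definition cdet :: "C2 \<Rightarrow> C2 \<Rightarrow> C2 \<Rightarrow> complex" where
  "cdet x y z = (fst y - fst x) * (snd z - snd x) - (snd y - snd x) * (fst z - fst x)"

lemma col_imp_cdet: "on_common_line x y z \<Longrightarrow> cdet x y z = 0"
  unfolding on_common_line_def cline_def cdet_def
  by (auto simp: algebra_simps)

lemma cdet_cyc: "cdet x y z = cdet y z x"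
  unfolding cdet_def by (simp add: algebra_simps)
lemma cdet_swap: "cdet x y z = - cdet y x z"
  unfolding cdet_def by (simp add: algebra_simps)

lemma cdet_imp_col:
  assumes "cdet x y z = 0" shows "on_common_line x y z"
proof (cases "y = x")
  case True
  show ?thesis
  proof (cases "z = x")
    case True
    then show ?thesis using \<open>y = x\<close> unfolding on_common_line_def cline_def
      by (rule_tac x=x in exI, rule_tac x="(1,0)" in exI) (auto intro!: exI[of _ 0])
  next
    case False
    then show ?thesis using \<open>y = x\<close> unfolding on_common_line_def cline_def
    proof (rule_tac x=x in exI, rule_tac x="z - x" in exI, intro conjI)
      show "z - x \<noteq> (0,0)" using False by (metis eq_iff_diff_eq_0 zero_prod_def)
      show "y \<in> {(fst x + t * fst (z - x), snd x + t * snd (z - x)) |t. True}"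
        using \<open>y = x\<close> by (auto intro!: exI[of _ 0])
      show "x \<in> {(fst x + t * fst (z - x), snd x + t * snd (z - x)) |t. True}"
        by (auto intro!: exI[of _ 0])
      show "z \<in> {(fst x + t * fst (z - x), snd x + t * snd (z - x)) |t. True}"
        by (auto intro!: exI[of _ 1])
    qed
  qed
next
  case False
  obtain x1 x2 y1 y2 z1 z2 where xyz: "x = (x1,x2)" "y = (y1,y2)" "z = (z1,z2)"
    by (metis prod.exhaust)
  have d: "(y1 - x1) * (z2 - x2) = (y2 - x2) * (z1 - x1)"
    using assms unfolding cdet_def xyz by simp
  show ?thesis
  proof (cases "y1 = x1")
    case True
    then have "y2 \<noteq> x2" using False xyz by auto
    then have "z1 = x1" using d True by simp
    show ?thesis unfolding on_common_line_def xyz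
    proof (rule_tac x="(x1,x2)" in exI, rule_tac x="(0, y2 - x2)" in exI, intro conjI)
      show "(0, y2 - x2) \<noteq> (0,0)" using \<open>y2 \<noteq> x2\<close> by simp
      show "(x1, x2) \<in> cline (x1, x2) (0, y2 - x2)" unfolding cline_def by (auto intro!: exI[of _ 0])
      show "(y1, y2) \<in> cline (x1, x2) (0, y2 - x2)" unfolding cline_def using True by (auto intro!: exI[of _ 1])
      show "(z1, z2) \<in> cline (x1, x2) (0, y2 - x2)" unfolding cline_def using \<open>z1 = x1\<close> \<open>y2 \<noteq> x2\<close>
        by (auto intro!: exI[of _ "(z2 - x2)/(y2-x2)"])
    qed
  next
    case False
    have "z2 = x2 + (z1 - x1)/(y1 - x1) * (y2 - x2)"
      using d False by (simp add: field_simps)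
    show ?thesis unfolding on_common_line_def xyz
    proof (rule_tac x="(x1,x2)" in exI, rule_tac x="(y1 - x1, y2 - x2)" in exI, intro conjI)
      show "(y1 - x1, y2 - x2) \<noteq> (0,0)" using False by simp
      show "(x1, x2) \<in> cline (x1, x2) (y1 - x1, y2 - x2)" unfolding cline_def by (auto intro!: exI[of _ 0])
      show "(y1, y2) \<in> cline (x1, x2) (y1 - x1, y2 - x2)" unfolding cline_def by (auto intro!: exI[of _ 1])
      show "(z1, z2) \<in> cline (x1, x2) (y1 - x1, y2 - x2)" unfolding cline_def using False \<open>z2 = _\<close>
        by (auto intro!: exI[of _ "(z1 - x1)/(y1-x1)"])
    qed
  qed
qed

lemma col_iff: "on_common_line x y z \<longleftrightarrow> cdet x y z = 0"
  using col_imp_cdet cdet_imp_col by blast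

definition tp :: "real \<Rightarrow> nat \<Rightarrow> real" where
  "tp s k = (if k = 0 then 0 else if k = 1 then 3 else if k = 2 then 1 else if k = 3 then 2 + s else - real k)"

definition Pt :: "real \<Rightarrow> nat \<Rightarrow> C2" where
  "Pt s k = (complex_of_real (tp s k), complex_of_real ((tp s k)^2))"

lemma cdet_P3: "cdet (Pt s i) (Pt s j) (Pt s k) =
   complex_of_real ((tp s j - tp s i) * (tp s k - tp s i) * (tp s k - tp s j))"
  unfolding cdet_def Pt_def by (simp add: algebra_simps power2_eq_square)

definition lab :: "real \<Rightarrow> real \<Rightarrow> C2 \<Rightarrow> complex" where
  "lab a b y = snd y - of_real (a + b) * fst y + of_real (a * b)"

lemma cdet_yP: "cdet y (Pt s i) (Pt s j) = of_real (tp s j - tp s i) * lab (tp s i) (tp s j) y"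
  unfolding cdet_def Pt_def lab_def by (simp add: algebra_simps power2_eq_square)

lemma tp_inj: assumes "0 \<le> s" "s \<le> 1/2" "i \<noteq> j" shows "tp s i \<noteq> tp s j"
  using assms unfolding tp_def by auto

definition L1 :: "C2 \<Rightarrow> complex" where "L1 y = snd y - 3 * fst y"
definition L2 :: "real \<Rightarrow> C2 \<Rightarrow> complex" where
  "L2 s y = snd y - (3 + of_real s) * fst y + (2 + of_real s)"

lemma lab01: "lab (tp s 0) (tp s 1) y = L1 y"
  unfolding lab_def tp_def L1_def by simp
lemma lab23: "lab (tp s 2) (tp s 3) y = L2 s y"
  unfolding lab_def tp_def L2_def by (simp add: algebra_simps)

definition Yp :: "real \<Rightarrow> complex \<Rightarrow> complex \<Rightarrow> C2" where
  "Yp s z1 z2 = ((2 + of_real s - z2 + z1) / of_real s, z1 + 3 * ((2 + of_real s - z2 + z1) / of_real s))"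

lemma L1_Yp: "L1 (Yp s z1 z2) = z1" unfolding L1_def Yp_def by simp
lemma L2_Yp: "s \<noteq> 0 \<Longrightarrow> L2 s (Yp s z1 z2) = z2" unfolding L2_def Yp_def
  by (simp add: field_simps)

lemma real_bound:
  fixes a b R :: real
  assumes "a \<le> -4" "b \<le> 3" "R \<ge> 6"
  shows "(3 - a - b) * R + a * b \<ge> 12"
proof -
  have e: "(3 - a - b) * R + a * b = (3 - b) * R + (-a) * (R - b)" by (simp add: algebra_simps)
  have "(3 - b) * R \<ge> 0" using assms by simp
  moreover have "(-a) * (R - b) \<ge> 4 * 3" using assms by (intro mult_mono) auto
  ultimately show ?thesis using e by linarith
qed

lemma tp_le3: "tp s k \<le> 3 \<or> (k = 3 \<and> s > 1)" unfolding tp_def by auto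
lemma tp_big: "k \<ge> 4 \<Longrightarrow> tp s k = - real k" unfolding tp_def by auto

lemma torus_avoid:
  assumes s: "0 < s" "s \<le> 1/4" and z1: "norm z1 = 1/4" and z2: "norm z2 = 1/4"
    and ij: "i \<noteq> j"
  shows "lab (tp s i) (tp s j) (Yp s z1 z2) \<noteq> 0"
proof -
  define y where "y = Yp s z1 z2"
  define R where "R = Re (fst y)"
  have "\<bar>Re z1\<bar> \<le> 1/4" "\<bar>Re z2\<bar> \<le> 1/4" using abs_Re_le_cmod z1 z2 by metis+
  have fy: "fst y = (2 + of_real s - z2 + z1) / of_real s" unfolding y_def Yp_def by simp
  have R: "R = (2 + s - Re z2 + Re z1) / s" unfolding R_def fy by (simp add: Re_divide_of_real)
  have "R \<ge> 6"
  proof -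
    have "(2 + s - Re z2 + Re z1) \<ge> 6 * s" using \<open>\<bar>Re z1\<bar> \<le> 1/4\<close> \<open>\<bar>Re z2\<bar> \<le> 1/4\<close> s by linarith
    then show ?thesis unfolding R using s by (simp add: field_simps)
  qed
  have sy: "snd y = z1 + 3 * fst y" unfolding y_def Yp_def by simp
  have Relab: "Re (lab a b y) = Re z1 + (3 - a - b) * R + a * b" for a b
    unfolding lab_def sy R_def by (simp add: algebra_simps)
  have key: "\<bar>(3 - a - b) * R + a * b\<bar> > 1/4 \<Longrightarrow> lab a b y \<noteq> 0" for a b
  proof
    assume "\<bar>(3 - a - b) * R + a * b\<bar> > 1/4" "lab a b y = 0"
    then have "(3 - a - b) * R + a * b = - Re z1" using Relab[of a b] by simp
    then show False using \<open>\<bar>(3 - a - b) * R + a * b\<bar> > 1/4\<close> \<open>\<bar>Re z1\<bar> \<le> 1/4\<close> by simp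
  qed
  have sym: "lab a b y = lab b a y" for a b unfolding lab_def by (simp add: algebra_simps)
  have big: "lab (tp s i) (tp s j) y \<noteq> 0" if "i \<ge> 4" for i j
  proof -
    have "tp s j \<le> 3" using tp_le3[of s j] s by auto
    then have "(3 - tp s i - tp s j) * R + tp s i * tp s j \<ge> 12"
      using real_bound[of "tp s i" "tp s j" R] tp_big[OF that] that \<open>R \<ge> 6\<close> by auto
    then show ?thesis by (intro key) auto
  qed
  show ?thesis
  proof (cases "i \<ge> 4 \<or> j \<ge> 4")
    case True
    then show ?thesis using big[of i j] big[of j i] sym unfolding y_def by metis
  next
    case False
    then have "i < 4" "j < 4" by auto
    have "z1 \<noteq> 0" "z2 \<noteq> 0" "s \<noteq> 0" using z1 z2 s by auto
    then have l1: "lab (tp s 0) (tp s 1) y \<noteq> 0" and l2: "lab (tp s 2) (tp s 3) y \<noteq> 0"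
      unfolding y_def lab01 lab23 L1_Yp L2_Yp[OF \<open>s \<noteq> 0\<close>] by auto
    have "lab (tp s 0) (tp s 2) y \<noteq> 0" using \<open>R \<ge> 6\<close> by (intro key) (simp add: tp_def)
    moreover have "lab (tp s 0) (tp s 3) y \<noteq> 0"
    proof (intro key)
      have "(1 - s) * R \<ge> (3/4) * 6" using s \<open>R \<ge> 6\<close> by (intro mult_mono) auto
      then show "\<bar>(3 - tp s 0 - tp s 3) * R + tp s 0 * tp s 3\<bar> > 1/4" by (simp add: tp_def)
    qed
    moreover have "lab (tp s 1) (tp s 2) y \<noteq> 0" using \<open>R \<ge> 6\<close> by (intro key) (simp add: tp_def)
    moreover have "lab (tp s 1) (tp s 3) y \<noteq> 0"
    proof (intro key)
      have "(2 + s) * (R - 3) \<ge> 2 * 3" using s \<open>R \<ge> 6\<close> by (intro mult_mono) auto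
      then show "\<bar>(3 - tp s 1 - tp s 3) * R + tp s 1 * tp s 3\<bar> > 1/4" by (simp add: tp_def algebra_simps)
    qed
    ultimately have A: "lab (tp s a) (tp s b) y \<noteq> 0"
      if "(a = 0 \<or> a = 1 \<or> a = 2 \<or> a = 3) \<and> (b = 0 \<or> b = 1 \<or> b = 2 \<or> b = 3) \<and> a < b" for a b
      using l1 l2 that by auto
    have "i = 0 \<or> i = 1 \<or> i = 2 \<or> i = 3" "j = 0 \<or> j = 1 \<or> j = 2 \<or> j = 3"
      using \<open>i < 4\<close> \<open>j < 4\<close> by arith+
    then have "lab (tp s i) (tp s j) y \<noteq> 0"
      using A[of i j] A[of j i] sym[of "tp s i" "tp s j"] ij by (cases "i < j") auto
    then show ?thesis unfolding y_def .
  qed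
qed

lemma exp1_const:
  fixes h :: "'a::topological_space \<Rightarrow> complex"
  assumes S: "connected S" and hc: "continuous_on S h" and e: "\<And>x. x \<in> S \<Longrightarrow> exp (h x) = 1"
    and xy: "x \<in> S" "y \<in> S"
  shows "h x = h y"
proof -
  have "h constant_on S"
  proof (rule continuous_discrete_range_constant[OF S hc])
    fix x assume x: "x \<in> S"
    show "\<exists>e>0. \<forall>y. y \<in> S \<and> h y \<noteq> h x \<longrightarrow> e \<le> norm (h y - h x)"
    proof (intro exI[of _ "2*pi"] conjI allI impI)
      show "2 * pi > 0" by simp
      fix y assume y: "y \<in> S \<and> h y \<noteq> h x"
      have "exp (h y - h x) = 1" using e[of x] e[of y] x y by (simp add: exp_diff)
      then obtain k :: int where k: "Im (h y - h x) = of_int (2 * k) * pi" "Re (h y - h x) = 0"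
        unfolding exp_eq_1 by blast
      have "k \<noteq> 0" using k y by (cases "k = 0") (auto simp: complex_eq_iff)
      then have "1 \<le> \<bar>real_of_int k\<bar>" by linarith
      then have "2 * pi * 1 \<le> 2 * pi * \<bar>real_of_int k\<bar>" by (intro mult_left_mono) auto
      also have "\<dots> = \<bar>Im (h y - h x)\<bar>" using k by (simp add: abs_mult)
      also have "\<dots> \<le> norm (h y - h x)" by (rule abs_Im_le_cmod)
      finally show "2 * pi \<le> norm (h y - h x)" by simp
    qed
  qed
  then show ?thesis using xy unfolding constant_on_def by metis
qed

lemma shift_const:
  fixes G K :: "real \<times> real \<times> real \<Rightarrow> complex"
  assumes Gc: "continuous_on ({0..1} \<times> UNIV) G"
    and GK: "\<And>x. x \<in> {0..1} \<times> UNIV \<Longrightarrow> K x = exp (G x)"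
    and per: "\<And>x. x \<in> {0..1} \<times> UNIV \<Longrightarrow> K (x + (0,dA,dB)) = K x"
    and init: "\<And>u v. K (0,u,v) = c * exp (\<i> * of_real (2 * pi * (a * u + b * v)))" and c: "c \<noteq> 0"
    and x: "x \<in> {0..1} \<times> UNIV"
  shows "G (x + (0,dA,dB)) = G x + \<i> * of_real (2 * pi * (a * dA + b * dB))"
proof -
  define S :: "(real \<times> real \<times> real) set" where "S = {0..1} \<times> UNIV"
  define d :: "real \<times> real \<times> real" where "d = (0,dA,dB)"
  have cS: "connected S" unfolding S_def by (intro convex_connected convex_Times) auto
  have dS: "y + d \<in> S" if "y \<in> S" for y using that unfolding S_def d_def by (auto simp: mem_Times_iff)
  define h where "h y = G (y + d) - G y" for y
  have hc: "continuous_on S h" unfolding h_def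
    using Gc dS unfolding S_def
    by (intro continuous_intros continuous_on_compose2[OF Gc]) (auto simp: S_def d_def)
  have he: "exp (h y) = 1" if "y \<in> S" for y
  proof -
    have "K y \<noteq> 0" using GK that unfolding S_def by simp
    moreover have "K (y + d) = K y" using per that unfolding S_def d_def by simp
    ultimately show ?thesis unfolding h_def exp_diff using GK[of y] GK[of "y + d"] that dS[OF that]
      unfolding S_def by simp
  qed
  have 0: "(0,0,0) \<in> S" unfolding S_def by auto
  have hx: "h x = h (0,0,0)" using exp1_const[OF cS hc he] x 0 unfolding S_def by blast
  define S0 :: "(real \<times> real \<times> real) set" where "S0 = {0} \<times> UNIV"
  have cS0: "connected S0" unfolding S0_def by (intro convex_connected convex_Times) auto
  have S0S: "S0 \<subseteq> S" unfolding S0_def S_def by auto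
  define q where "q y = G y - \<i> * of_real (2*pi*(a * fst (snd y) + b * snd (snd y))) - G (0,0,0)" for y
  have qc: "continuous_on S0 q" unfolding q_def
    using continuous_on_subset[OF Gc S0S[unfolded S_def]] by (intro continuous_intros) auto
  have qe: "exp (q y) = 1" if "y \<in> S0" for y
  proof -
    have "fst y = 0" using that unfolding S0_def by auto
    then obtain u v where y: "y = (0,u,v)" by (metis prod.collapse)
    have "exp (G y) = c * exp (\<i> * of_real (2 * pi * (a * u + b * v)))" using GK[of y] init[of u v] y by simp
    moreover have "exp (G (0,0,0)) = c" using GK[of "(0,0,0)"] init[of 0 0] by simp
    ultimately show ?thesis unfolding q_def exp_diff y using c by simp
  qed
  have "q (0,dA,dB) = q (0,0,0)" using exp1_const[OF cS0 qc qe] unfolding S0_def by auto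
  then have "G (0,dA,dB) = G (0,0,0) + \<i> * of_real (2 * pi * (a * dA + b * dB))" unfolding q_def
    by (simp add: algebra_simps)
  then have "h (0,0,0) = \<i> * of_real (2 * pi * (a * dA + b * dB))" unfolding h_def d_def by simp
  then have "G (x + (0,dA,dB)) - G x = \<i> * of_real (2 * pi * (a * dA + b * dB))"
    using hx unfolding h_def d_def by simp
  then show ?thesis by (simp add: algebra_simps)
qed

lemma periodic_bounded:
  fixes D :: "real \<times> real \<Rightarrow> real \<times> real"
  assumes Dc: "continuous_on UNIV D" and p1: "\<And>w. D (w + (1,0)) = D w" and p2: "\<And>w. D (w + (0,1)) = D w"
  shows "\<exists>M. \<forall>w. norm (D w) \<le> M"
proof -
  have n1: "D (w + (of_nat m, 0)) = D w" for m w
  proof (induction m)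
    case (Suc m)
    have e: "w + (of_nat (Suc m), 0) = (w + (of_nat m, 0)) + (1,0)" by (cases w) simp
    show ?case unfolding e p1 by (rule Suc.IH)
  qed (simp add: zero_prod_def[symmetric])
  have n2: "D (w + (0, of_nat m)) = D w" for m w
  proof (induction m)
    case (Suc m)
    have e: "w + (0, of_nat (Suc m)) = (w + (0, of_nat m)) + (0,1)" by (cases w) simp
    show ?case unfolding e p2 by (rule Suc.IH)
  qed (simp add: zero_prod_def[symmetric])
  have i1: "D (w + (of_int k, 0)) = D w" for k w
  proof (cases "k \<ge> 0")
    case True
    then show ?thesis using n1[of w "nat k"] by simp
  next
    case False
    have "D (w + (of_int k, 0) + (of_nat (nat (-k)), 0)) = D (w + (of_int k, 0))" by (rule n1)
    moreover have "w + (of_int k, 0) + (of_nat (nat (-k)), 0) = w" using False by (cases w) simp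
    ultimately show ?thesis by simp
  qed
  have i2: "D (w + (0, of_int k)) = D w" for k w
  proof (cases "k \<ge> 0")
    case True
    then show ?thesis using n2[of w "nat k"] by simp
  next
    case False
    have "D (w + (0, of_int k) + (0, of_nat (nat (-k)))) = D (w + (0, of_int k))" by (rule n2)
    moreover have "w + (0, of_int k) + (0, of_nat (nat (-k))) = w" using False by (cases w) simp
    ultimately show ?thesis by simp
  qed
  have "compact (D ` ({0..1} \<times> {0..1}))"
    by (intro compact_continuous_image continuous_on_subset[OF Dc] compact_Times) auto
  then obtain M where M: "\<And>y. y \<in> D ` ({0..1} \<times> {0..1}) \<Longrightarrow> norm y \<le> M"
    using compact_imp_bounded bounded_pos by metis
  have "norm (D w) \<le> M" for w
  proof -
    obtain u v where w: "w = (u,v)" by fastforce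
    define w' where "w' = (u - of_int (floor u), v - of_int (floor v))"
    have "w' = w + (of_int (- floor u), 0) + (0, of_int (- floor v))" unfolding w'_def w by simp
    then have "D w' = D w" by (simp only: i1 i2)
    moreover have "w' \<in> {0..1} \<times> {0..1}" unfolding w'_def
      using frac_lt_1[of u] frac_lt_1[of v] frac_ge_0[of u] frac_ge_0[of v]
      unfolding frac_def by (auto simp: mem_Times_iff)
    ultimately show ?thesis using M[of "D w'"] by (metis imageI)
  qed
  then show ?thesis by blast
qed

lemma surj_pert:
  fixes F :: "real \<times> real \<Rightarrow> real \<times> real"
  assumes Fc: "continuous_on UNIV F" and M: "\<And>w. norm (F w - c *\<^sub>R w) \<le> M" and c: "c > 0"
  shows "\<exists>w. F w = q"
proof -
  define R where "R = (norm q + M) / c + 1"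
  have M0: "M \<ge> 0" using M[of 0] norm_ge_zero order_trans by blast
  have "(norm q + M) / c \<ge> 0" using M0 c by simp
  then have R0: "R > 0" unfolding R_def by linarith
  define h where "h w = (1/c) *\<^sub>R (q - (F w - c *\<^sub>R w))" for w
  have hc: "continuous_on (cball 0 R) h" unfolding h_def
    by (intro continuous_intros continuous_on_subset[OF Fc]) auto
  have hb: "h \<in> cball 0 R \<rightarrow> cball 0 R"
  proof
    fix w
    have "norm (h w) = (1/c) * norm (q - (F w - c *\<^sub>R w))" unfolding h_def using c by simp
    also have "\<dots> \<le> (1/c) * (norm q + M)"
      using norm_triangle_ineq4[of q "F w - c *\<^sub>R w"] M[of w] c by (intro mult_left_mono) auto
    also have "\<dots> \<le> R" unfolding R_def by simp
    finally show "h w \<in> cball 0 R" by simp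
  qed
  obtain w where "h w = w" using brouwer_ball[OF R0 hc hb] by blast
  then have "(1/c) *\<^sub>R (q - (F w - c *\<^sub>R w)) = w" unfolding h_def .
  then have "c *\<^sub>R ((1/c) *\<^sub>R (q - (F w - c *\<^sub>R w))) = c *\<^sub>R w" by simp
  then have "q - (F w - c *\<^sub>R w) = c *\<^sub>R w" using c by simp
  then show ?thesis by (intro exI[of _ w]) (simp add: algebra_simps)
qed

lemma topspace_Xtop: "topspace (Xtop m) = Xset m"
  unfolding Xtop_def Xset_def by auto

definition cfg :: "nat \<Rightarrow> real \<Rightarrow> (nat \<Rightarrow> C2)" where
  "cfg m s = restrict (Pt s) {..<m}"

lemma cfg_in: assumes "0 \<le> s" "s \<le> 1/2" shows "cfg m s \<in> Xset m"
proof -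
  have "\<not> on_common_line (Pt s i) (Pt s j) (Pt s k)" if "i \<noteq> j" "i \<noteq> k" "j \<noteq> k" for i j k
    unfolding col_iff cdet_P3 using tp_inj[OF assms] that by auto
  then show ?thesis unfolding Xset_def cfg_def by auto
qed

definition ext :: "nat \<Rightarrow> real \<Rightarrow> C2 \<Rightarrow> (nat \<Rightarrow> C2)" where
  "ext n s y = restrict ((Pt s)(n - 1 := y)) {..<n}"

lemma proj_ext: "n \<ge> 1 \<Longrightarrow> proj_last n (ext n s y) = cfg (n-1) s"
  unfolding proj_last_def ext_def cfg_def by (auto simp: restrict_def fun_eq_iff)

lemma ext_last: "n \<ge> 1 \<Longrightarrow> ext n s y (n - 1) = y"
  unfolding ext_def by simp

lemma ext_in:
  assumes n: "n \<ge> 1" and s: "0 \<le> s" "s \<le> 1/2"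
    and y: "\<And>a b. a < n - 1 \<Longrightarrow> b < n - 1 \<Longrightarrow> a \<noteq> b \<Longrightarrow> lab (tp s a) (tp s b) y \<noteq> 0"
  shows "ext n s y \<in> Xset n"
proof -
  have yP: "cdet y (Pt s a) (Pt s b) \<noteq> 0" if "a < n - 1" "b < n - 1" "a \<noteq> b" for a b
    unfolding cdet_yP using y[OF that] tp_inj[OF s that(3)] by simp
  have "\<not> on_common_line (ext n s y i) (ext n s y j) (ext n s y k)"
    if "i < n" "j < n" "k < n" "i \<noteq> j" "i \<noteq> k" "j \<noteq> k" for i j k
  proof -
    have "cdet (ext n s y i) (ext n s y j) (ext n s y k) \<noteq> 0"
    proof (cases "i = n - 1")
      case True
      then show ?thesis using that yP[of j k] by (simp add: ext_def)
    next
      case Fi: False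
      show ?thesis
      proof (cases "j = n - 1")
        case True
        then show ?thesis using that Fi yP[of i k] cdet_swap[of "Pt s i" y "Pt s k"] by (simp add: ext_def)
      next
        case Fj: False
        show ?thesis
        proof (cases "k = n - 1")
          case True
          then show ?thesis using that Fi Fj yP[of i j] cdet_cyc[of "Pt s i" "Pt s j" y] cdet_cyc[of "Pt s j" y "Pt s i"]
            by (simp add: ext_def)
        next
          case False
          then show ?thesis using that Fi Fj tp_inj[OF s] by (simp add: ext_def cdet_P3)
        qed
      qed
    qed
    then show ?thesis unfolding col_iff .
  qed
  then show ?thesis unfolding Xset_def ext_def by auto
qed

lemma fib_l:
  assumes n: "n \<ge> 5" and w: "w \<in> Xset n" and pw: "proj_last n w = cfg (n-1) s"
    and s: "0 \<le> s" "s \<le> 1/2"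
  shows "L1 (w (n-1)) \<noteq> 0" "L2 s (w (n-1)) \<noteq> 0"
proof -
  have wk: "w k = Pt s k" if "k < n - 1" for k
    using fun_cong[OF pw, of k] that unfolding proj_last_def cfg_def by simp
  have nc: "\<not> on_common_line (w i) (w j) (w k)" if "i < n" "j < n" "k < n" "i \<noteq> j" "i \<noteq> k" "j \<noteq> k" for i j k
    using w that unfolding Xset_def by blast
  have "cdet (w (n-1)) (w 0) (w 1) \<noteq> 0" using nc[of "n-1" 0 1] n unfolding col_iff by auto
  then have "cdet (w (n-1)) (Pt s 0) (Pt s 1) \<noteq> 0" using wk[of 0] wk[of 1] n by auto
  then show "L1 (w (n-1)) \<noteq> 0" unfolding cdet_yP lab01 by simp
  have "cdet (w (n-1)) (w 2) (w 3) \<noteq> 0" using nc[of "n-1" 2 3] n unfolding col_iff by auto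
  then have "cdet (w (n-1)) (Pt s 2) (Pt s 3) \<noteq> 0" using wk[of 2] wk[of 3] n by auto
  then show "L2 s (w (n-1)) \<noteq> 0" unfolding cdet_yP lab23 by simp
qed

lemma tp_cont: "continuous_on A (\<lambda>s. tp s k)"
proof (cases "k = 3")
  case True then show ?thesis by (simp add: tp_def continuous_intros)
next
  case False
  then have e: "(\<lambda>s. tp s k) = (\<lambda>s. tp 0 k)" by (simp add: tp_def fun_eq_iff)
  show ?thesis by (subst e) (rule continuous_on_const)
qed

lemma Pt_cont: "continuous_on A (\<lambda>s. Pt s k)"
  unfolding Pt_def by (intro continuous_intros tp_cont)

lemma cont_cfg: "continuous_map (top_of_set {0..1/2}) (Xtop m) (cfg m)"
  unfolding Xtop_def
proof (rule continuous_map_into_subtopology)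
  show "continuous_map (top_of_set {0..1/2}) (product_topology (\<lambda>_. euclidean) {..<m}) (cfg m)"
    unfolding continuous_map_componentwise
  proof (intro conjI ballI)
    show "cfg m ` topspace (top_of_set {0..1 / 2}) \<subseteq> extensional {..<m}"
      unfolding cfg_def by auto
    fix k assume "k \<in> {..<m}"
    then have "continuous_on {0..1/2} (\<lambda>x. cfg m x k)"
      unfolding cfg_def using Pt_cont by simp
    then show "continuous_map (top_of_set {0..1 / 2}) euclidean (\<lambda>x. cfg m x k)" by simp
  qed
  show "cfg m \<in> topspace (top_of_set {0..1 / 2}) \<rightarrow> Xset m" using cfg_in by auto
qed

definition zt :: "real \<Rightarrow> complex" where "zt u = (1/4) * exp (\<i> * of_real (2 * pi * u))"

lemma zt_norm: "norm (zt u) = 1/4" unfolding zt_def by (simp add: norm_mult)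
lemma zt_per: "zt (u + 1) = zt u"
proof -
  have "\<i> * of_real (2 * pi * (u + 1)) = \<i> * of_real (2 * pi * u) + 2 * pi * \<i>"
    by (simp add: algebra_simps)
  then show ?thesis unfolding zt_def by (simp add: exp_add)
qed
lemma zt_cont: "continuous_on A zt" unfolding zt_def by (intro continuous_intros)

definition tor :: "nat \<Rightarrow> real \<Rightarrow> real \<times> real \<times> real \<Rightarrow> (nat \<Rightarrow> C2)" where
  "tor n s x = ext n s (Yp s (zt (fst (snd x))) (zt (snd (snd x))))"

lemma tor_in: assumes "n \<ge> 5" "0 < s" "s \<le> 1/4" shows "tor n s x \<in> Xset n"
  unfolding tor_def using assms
  by (intro ext_in torus_avoid zt_norm) auto

lemma tor_cont: assumes "n \<ge> 5" "0 < s" "s \<le> 1/4"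
  shows "continuous_map (top_of_set A) (Xtop n) (tor n s)"
  unfolding Xtop_def
proof (rule continuous_map_into_subtopology)
  show "continuous_map (top_of_set A) (product_topology (\<lambda>_. euclidean) {..<n}) (tor n s)"
    unfolding continuous_map_componentwise
  proof (intro conjI ballI)
    show "tor n s ` topspace (top_of_set A) \<subseteq> extensional {..<n}"
      unfolding tor_def ext_def by auto
    fix k assume "k \<in> {..<n}"
    have "continuous_on A (\<lambda>x. tor n s x k)"
    proof (cases "k = n - 1")
      case True
      then show ?thesis using \<open>k \<in> {..<n}\<close> assms unfolding tor_def ext_def Yp_def
        by (auto intro!: continuous_intros continuous_on_compose2[OF zt_cont])
    next
      case False
      then show ?thesis using \<open>k \<in> {..<n}\<close> unfolding tor_def ext_def by auto
    qed
    then show "continuous_map (top_of_set A) euclidean (\<lambda>x. tor n s x k)" by simp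
  qed
  show "tor n s \<in> topspace (top_of_set A) \<rightarrow> Xset n" using tor_in[OF assms] by auto
qed

theorem proposition4p1:
  fixes n :: nat
  assumes "n \<ge> 5"
  shows "\<not> (\<exists>F :: 'c topology. locally_trivial (Xtop n) (Xtop (n - 1)) (proj_last n) F)"
proof
  assume "\<exists>F :: 'c topology. locally_trivial (Xtop n) (Xtop (n - 1)) (proj_last n) F"
  then obtain F :: "'c topology" where lt: "locally_trivial (Xtop n) (Xtop (n - 1)) (proj_last n) F"
    by blast
  have n: "n \<ge> 5" by fact
  have b0: "cfg (n-1) 0 \<in> topspace (Xtop (n-1))" using cfg_in[of 0] by (simp add: topspace_Xtop)
  obtain U \<phi> where Uo: "openin (Xtop (n-1)) U" and b0U: "cfg (n-1) 0 \<in> U"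
    and hm: "homeomorphic_map (subtopology (Xtop n) {e \<in> topspace (Xtop n). proj_last n e \<in> U})
                         (prod_topology (subtopology (Xtop (n-1)) U) F) \<phi>"
    and f\<phi>: "\<forall>e \<in> topspace (Xtop n). proj_last n e \<in> U \<longrightarrow> fst (\<phi> e) = proj_last n e"
  proof -
    have "\<forall>b \<in> topspace (Xtop (n-1)). \<exists>U \<phi>. openin (Xtop (n-1)) U \<and> b \<in> U \<and>
        homeomorphic_map (subtopology (Xtop n) {e \<in> topspace (Xtop n). proj_last n e \<in> U})
                         (prod_topology (subtopology (Xtop (n-1)) U) F) \<phi> \<and>
        (\<forall>e \<in> topspace (Xtop n). proj_last n e \<in> U \<longrightarrow> fst (\<phi> e) = proj_last n e)"
      using lt unfolding locally_trivial_def by (rule conjunct2)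
    then have "\<exists>U \<phi>. openin (Xtop (n-1)) U \<and> cfg (n-1) 0 \<in> U \<and>
        homeomorphic_map (subtopology (Xtop n) {e \<in> topspace (Xtop n). proj_last n e \<in> U})
                         (prod_topology (subtopology (Xtop (n-1)) U) F) \<phi> \<and>
        (\<forall>e \<in> topspace (Xtop n). proj_last n e \<in> U \<longrightarrow> fst (\<phi> e) = proj_last n e)"
      using b0 by (rule bspec)
    then show ?thesis using that by (elim exE conjE)
  qed
  define E' where "E' = subtopology (Xtop n) {e \<in> topspace (Xtop n). proj_last n e \<in> U}"
  define PR where "PR = prod_topology (subtopology (Xtop (n-1)) U) F"
  obtain g where hms: "homeomorphic_maps E' PR \<phi> g"
    using hm[unfolded homeomorphic_map_maps] unfolding E'_def PR_def by blast
  have \<phi>c: "continuous_map E' PR \<phi>" and gc: "continuous_map PR E' g"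
    and g\<phi>: "\<And>x. x \<in> topspace E' \<Longrightarrow> g (\<phi> x) = x" and \<phi>g: "\<And>y. y \<in> topspace PR \<Longrightarrow> \<phi> (g y) = y"
    using hms unfolding homeomorphic_maps_def by auto
  have tE': "topspace E' = {e \<in> Xset n. proj_last n e \<in> U}" unfolding E'_def by (auto simp: topspace_Xtop)

  have "openin (top_of_set {0..1/2}) {s \<in> topspace (top_of_set {0..1/2::real}). cfg (n-1) s \<in> U}"
    by (rule openin_continuous_map_preimage[OF cont_cfg Uo])
  then have op: "openin (top_of_set {0..1/2}) {s \<in> {0..1/2::real}. cfg (n-1) s \<in> U}" by simp
  have "0 \<in> {s \<in> {0..1/2::real}. cfg (n-1) s \<in> U}" using b0U by simp
  then obtain \<delta> where \<delta>: "\<delta> > 0" "\<And>s. s \<in> {0..1/2} \<Longrightarrow> dist s 0 < \<delta> \<Longrightarrow> cfg (n-1) s \<in> U"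
    using op unfolding openin_euclidean_subtopology_iff by blast
  define s1 where "s1 = min (\<delta>/2) (1/4)"
  have s1: "0 < s1" "s1 \<le> 1/4" using \<delta> unfolding s1_def by auto
  have inU: "cfg (n-1) s \<in> U" if "0 \<le> s" "s \<le> s1" for s
    using \<delta>(2)[of s] that s1 \<delta>(1) unfolding s1_def by (auto simp: dist_real_def)

  define S :: "(real \<times> real \<times> real) set" where "S = {0..1} \<times> UNIV"
  define sp where "sp x = (1 - fst x) * s1" for x :: "real \<times> real \<times> real"
  have sp: "0 \<le> sp x" "sp x \<le> s1" if "x \<in> S" for x
  proof -
    have "0 \<le> 1 - fst x" "1 - fst x \<le> 1" using that unfolding S_def by (auto simp: mem_Times_iff)
    then show "0 \<le> sp x" "sp x \<le> s1" unfolding sp_def using s1 by (auto intro: mult_left_le_one_le)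
  qed
  define pr where "pr x = (cfg (n-1) (sp x), snd (\<phi> (tor n s1 x)))" for x
  define W where "W x = g (pr x)" for x
  define wl where "wl x = W x (n-1)" for x
  define K1 where "K1 x = L1 (wl x)" for x
  define K2 where "K2 x = L2 (sp x) (wl x)" for x

  have torX: "tor n s1 x \<in> Xset n" "proj_last n (tor n s1 x) = cfg (n-1) s1" for x
    using tor_in[OF n s1] proj_ext[of n s1] n unfolding tor_def by auto
  have torE': "tor n s1 x \<in> topspace E'" for x
    using torX inU[of s1] s1 unfolding tE' by auto
  have torc: "continuous_map (top_of_set S) E' (tor n s1)"
    unfolding E'_def
    by (rule continuous_map_into_subtopology[OF tor_cont[OF n s1]]) (use torE' tE' in \<open>auto simp: E'_def topspace_Xtop\<close>)
  have spc: "continuous_map (top_of_set S) (top_of_set {0..1/2}) sp"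
  proof (rule continuous_map_into_subtopology)
    show "continuous_map (top_of_set S) euclidean sp" unfolding sp_def by (simp add: continuous_intros)
    show "sp \<in> topspace (top_of_set S) \<rightarrow> {0..1/2}" using sp s1 by fastforce
  qed
  have c1: "continuous_map (top_of_set S) (subtopology (Xtop (n-1)) U) (\<lambda>x. cfg (n-1) (sp x))"
  proof (rule continuous_map_into_subtopology)
    show "continuous_map (top_of_set S) (Xtop (n - 1)) (\<lambda>x. cfg (n - 1) (sp x))"
      using continuous_map_compose[OF spc cont_cfg] by (simp add: o_def)
    show "(\<lambda>x. cfg (n - 1) (sp x)) \<in> topspace (top_of_set S) \<rightarrow> U" using inU sp by auto
  qed
  have c2: "continuous_map (top_of_set S) F (\<lambda>x. snd (\<phi> (tor n s1 x)))"
    using continuous_map_compose[OF continuous_map_compose[OF torc \<phi>c] continuous_map_snd[of "subtopology (Xtop (n-1)) U" F, folded PR_def]]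
    by (simp add: o_def)
  have prc: "continuous_map (top_of_set S) PR pr" unfolding PR_def pr_def
    by (rule continuous_map_pairedI[OF c1 c2])
  have Wc: "continuous_map (top_of_set S) E' W" unfolding W_def
    using continuous_map_compose[OF prc gc] by (simp add: o_def)
  have wlc: "continuous_on S wl"
  proof -
    have "continuous_map (top_of_set S) (Xtop n) W" using Wc unfolding E'_def
      by (rule continuous_map_into_fulltopology)
    then have "continuous_map (top_of_set S) (product_topology (\<lambda>_. euclidean) {..<n}) W"
      unfolding Xtop_def by (rule continuous_map_into_fulltopology)
    then have "continuous_map (top_of_set S) euclidean (\<lambda>x. W x (n-1))"
      unfolding continuous_map_componentwise using n by auto
    then show ?thesis unfolding wl_def by simp
  qed
  have prS: "pr x \<in> topspace PR" if "x \<in> S" for x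
    using continuous_map_image_subset_topspace[OF prc] that by auto
  have WE: "W x \<in> Xset n" "proj_last n (W x) = cfg (n-1) (sp x)" if "x \<in> S" for x
  proof -
    have "W x \<in> topspace E'" using continuous_map_image_subset_topspace[OF Wc] that by auto
    then have W: "W x \<in> Xset n" "proj_last n (W x) \<in> U" unfolding tE' by auto
    then show "W x \<in> Xset n" by simp
    from W have "proj_last n (W x) = fst (\<phi> (W x))" using f\<phi> by (auto simp: topspace_Xtop)
    also have "\<dots> = fst (pr x)" unfolding W_def using \<phi>g[OF prS[OF that]] by simp
    finally show "proj_last n (W x) = cfg (n-1) (sp x)" unfolding pr_def by simp
  qed
  have Knz: "K1 x \<noteq> 0" "K2 x \<noteq> 0" if "x \<in> S" for x
    using fib_l[OF n WE[OF that]] sp[OF that] s1 unfolding K1_def K2_def wl_def by auto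
  have K1c: "continuous_on S K1" unfolding K1_def L1_def
    by (intro continuous_intros wlc)
  have K2c: "continuous_on S K2" unfolding K2_def L2_def sp_def
    by (intro continuous_intros wlc)

  have t0: "wl (0,u,v) = Yp s1 (zt u) (zt v)" for u v
  proof -
    let ?x = "(0::real,u,v)"
    have e1: "sp ?x = s1" by (simp add: sp_def)
    have "fst (\<phi> (tor n s1 ?x)) = cfg (n-1) s1"
      using f\<phi> torX[of ?x] inU[of s1] s1 by (auto simp: topspace_Xtop)
    then have "pr ?x = \<phi> (tor n s1 ?x)" unfolding pr_def e1 by (metis prod.collapse)
    then have "W ?x = tor n s1 ?x" unfolding W_def using g\<phi> torE' by simp
    then show ?thesis unfolding wl_def tor_def using ext_last[of n] n by simp
  qed
  have K1_0: "K1 (0,u,v) = zt u" for u v unfolding K1_def t0 L1_Yp ..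
  have K2_0: "K2 (0,u,v) = zt v" for u v unfolding K2_def t0 using L2_Yp s1 by (simp add: sp_def)
  have K2_1: "K2 (1,u,v) = K1 (1,u,v) + 2" for u v unfolding K1_def K2_def sp_def L1_def L2_def by simp

  have torp1: "tor n s1 (x + (0,1,0)) = tor n s1 x" for x
    by (cases x) (simp add: tor_def zt_per)
  have torp2: "tor n s1 (x + (0,0,1)) = tor n s1 x" for x
    by (cases x) (simp add: tor_def zt_per)
  have spp: "sp (x + (0,d1,d2)) = sp x" for x d1 d2 by (simp add: sp_def)
  have prp1: "pr (x + (0,1,0)) = pr x" for x unfolding pr_def torp1 spp ..
  have prp2: "pr (x + (0,0,1)) = pr x" for x unfolding pr_def torp2 spp ..
  have Kp: "K1 (x + (0,1,0)) = K1 x" "K1 (x + (0,0,1)) = K1 x"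
           "K2 (x + (0,1,0)) = K2 x" "K2 (x + (0,0,1)) = K2 x" for x
    unfolding K1_def K2_def wl_def W_def prp1 prp2 spp by auto

  have cS: "contractible S" unfolding S_def by (intro convex_imp_contractible convex_Times) auto
  obtain G1 where G1c: "continuous_on S G1" and G1: "\<And>x. x \<in> S \<Longrightarrow> K1 x = exp (G1 x)"
    using continuous_logarithm_on_contractible[OF K1c cS] Knz by metis
  obtain G2 where G2c: "continuous_on S G2" and G2: "\<And>x. x \<in> S \<Longrightarrow> K2 x = exp (G2 x)"
    using continuous_logarithm_on_contractible[OF K2c cS] Knz by metis
  have i1: "K1 (0,u,v) = (1/4) * exp (\<i> * of_real (2 * pi * (a * u + b * v)))" if "a = 1" "b = 0" for u v a b
    unfolding K1_0 zt_def using that by simp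
  have i2: "K2 (0,u,v) = (1/4) * exp (\<i> * of_real (2 * pi * (a * u + b * v)))" if "a = 0" "b = 1" for u v a b
    unfolding K2_0 zt_def using that by simp
  have G1a: "G1 (x + (0,1,0)) = G1 x + \<i> * of_real (2 * pi * (1 * 1 + 0 * 0))" if "x \<in> S" for x
    by (rule shift_const[where c="1/4" and a=1 and b=0 and K=K1 and G=G1 and dA=1 and dB=0])
       (use G1c G1 Kp i1 that in \<open>auto simp: S_def\<close>)
  have G1b: "G1 (x + (0,0,1)) = G1 x + \<i> * of_real (2 * pi * (1 * 0 + 0 * 1))" if "x \<in> S" for x
    by (rule shift_const[where c="1/4" and a=1 and b=0 and K=K1 and G=G1 and dA=0 and dB=1])
       (use G1c G1 Kp i1 that in \<open>auto simp: S_def\<close>)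
  have G2a: "G2 (x + (0,1,0)) = G2 x + \<i> * of_real (2 * pi * (0 * 1 + 1 * 0))" if "x \<in> S" for x
    by (rule shift_const[where c="1/4" and a=0 and b=1 and K=K2 and G=G2 and dA=1 and dB=0])
       (use G2c G2 Kp i2 that in \<open>auto simp: S_def\<close>)
  have G2b: "G2 (x + (0,0,1)) = G2 x + \<i> * of_real (2 * pi * (0 * 0 + 1 * 1))" if "x \<in> S" for x
    by (rule shift_const[where c="1/4" and a=0 and b=1 and K=K2 and G=G2 and dA=0 and dB=1])
       (use G2c G2 Kp i2 that in \<open>auto simp: S_def\<close>)
  define Ft :: "real \<times> real \<Rightarrow> real \<times> real" where
    "Ft w = (Im (G1 (1, fst w, snd w)), Im (G2 (1, fst w, snd w)))" for w
  define D where "D w = Ft w - (2 * pi) *\<^sub>R w" for w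
  have emb: "(\<lambda>w::real \<times> real. (1::real, fst w, snd w)) ` UNIV \<subseteq> S" unfolding S_def by auto
  have embc: "continuous_on UNIV (\<lambda>w::real \<times> real. (1::real, fst w, snd w))" by (intro continuous_intros)
  have Ftc: "continuous_on UNIV Ft" unfolding Ft_def
    by (intro continuous_intros continuous_on_compose2[OF G1c embc emb] continuous_on_compose2[OF G2c embc emb])
  have Dc: "continuous_on UNIV D" unfolding D_def by (intro continuous_intros Ftc)
  have S1: "(1::real, u, v) \<in> S" for u v unfolding S_def by auto
  have Dp1: "D (w + (1,0)) = D w" for w
  proof -
    obtain u v where w: "w = (u,v)" by fastforce
    have a: "(1::real, u + 1, v) = (1, u, v) + (0,1,0)" by simp
    show ?thesis unfolding D_def Ft_def w using G1a[OF S1[of u v]] G2a[OF S1[of u v]]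
      by (simp add: a algebra_simps)
  qed
  have Dp2: "D (w + (0,1)) = D w" for w
  proof -
    obtain u v where w: "w = (u,v)" by fastforce
    have a: "(1::real, u, v + 1) = (1, u, v) + (0,0,1)" by simp
    show ?thesis unfolding D_def Ft_def w using G1b[OF S1[of u v]] G2b[OF S1[of u v]]
      by (simp add: a algebra_simps)
  qed
  obtain M where M: "\<And>w. norm (D w) \<le> M" using periodic_bounded[OF Dc Dp1 Dp2] by blast
  obtain w where Fw: "Ft w = (0, pi)"
    using surj_pert[OF Ftc, of "2 * pi" M "(0, pi)"] M unfolding D_def by auto
  define x where "x = (1::real, fst w, snd w)"
  have xS: "x \<in> S" unfolding x_def S_def by auto
  have im1: "Im (G1 x) = 0" and im2: "Im (G2 x) = pi" using Fw unfolding Ft_def x_def by auto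
  have "Re (K1 x) = exp (Re (G1 x))" using G1[OF xS] im1 by (simp add: Re_exp)
  moreover have "Re (K2 x) = - exp (Re (G2 x))" using G2[OF xS] im2 by (simp add: Re_exp)
  moreover have "K2 x = K1 x + 2" unfolding x_def by (rule K2_1)
  moreover note \<open>K2 x = K1 x + 2\<close>
  moreover have "Re (K2 x) = Re (K1 x) + 2" using \<open>K2 x = K1 x + 2\<close> by simp
  ultimately have "- exp (Re (G2 x)) = exp (Re (G1 x)) + 2" by simp
  moreover have "exp (Re (G2 x)) > 0" "exp (Re (G1 x)) > 0" by auto
  ultimately show False by linarith
qed

end
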